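(* Let $m,\gamma\in\mathbb{N}$ with $2\gamma<m$. Define $$\mu(v,j):=2^{m-\gamma}v+2^{m-2\gamma}(v\oplus 2^j),\qquad 0\le v<2^\gamma,\ 0\le j<\gamma,$$ and $$P_{m,\gamma}(x):=\frac{1}{\sqrt{\gamma}}\sum_{v=0}^{2^\gamma-1}\sum_{j=0}^{\gamma-1}w_{\mu(v,j)}(x).$$ Then: (i) $\|P_{m,\gamma}\|_{L^1([0,1))}\le 1$; (ii) $\|P_{m,\gamma}\|_{L^\infty([0,1))}\le 2^\gamma\sqrt{\gamma}$; (iii) $\mathrm{Spec}(P_{m,\gamma})\subset[2^{m-2\gamma},2^m)\cap 2^{m-2\gamma}\mathbb{N}_0$; (iv) for every $x\in[0,1)$ there exists an integer $\ell(x)\in[2^{m-\gamma},2^m)\cap 2^{m-2\gamma}\mathbb{N}$ such that $|S_{\ell(x)}(P_{m,\gamma};x)|\ge\frac14\sqrt{\gamma}$.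
   Context: For nonnegative integers $n=\sum_j n_j2^j$, $m=\sum_j m_j2^j$ (binary expansions, $n_j,m_j\in\{0,1\}$), the dyadic sum is $n\oplus m:=\sum_{j\ge0}|n_j-m_j|2^j$. The Rademacher functions are $r_j(x):=(-1)^{\lfloor 2^{j+1}x\rfloor}$ on $[0,1)$, $j\in\mathbb{N}_0$, and the Walsh--Paley functions are $w_n(x):=\prod_{j\ge0}r_j(x)^{n_j}$. For $f\in L^1([0,1))$, $\widehat f(n):=\int_0^1 f w_n$, and $S_n(f;x):=\sum_{k=0}^{n-1}\widehat f(k)w_k(x)$. For a Walsh polynomial $P$, $\mathrm{Spec}(P):=\{k\in\mathbb{N}_0:\widehat P(k)\ne0\}$. Here $2^{s}\mathbb{N}_0$ (resp. $2^s\mathbb{N}$) denotes the set of nonnegative (resp. positive) integer multiples of $2^s$. *)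

theory Defs
  imports "HOL-Analysis.Analysis"
begin

text \<open>Dyadic sum: bitwise exclusive or on naturals, i.e. sum of |n_j - m_j| 2^j.\<close>
definition dyadic_sum :: "nat \<Rightarrow> nat \<Rightarrow> nat" where
  "dyadic_sum n m = (\<Sum>j<max n m + 1. (if bit n j = bit m j then 0 else 1) * 2 ^ j)"

definition rademacher :: "nat \<Rightarrow> real \<Rightarrow> real" where
  "rademacher j x = (-1) powi \<lfloor>2 ^ (j + 1) * x\<rfloor>"

definition walsh :: "nat \<Rightarrow> real \<Rightarrow> real" where
  "walsh n x = (\<Prod>j<n + 1. rademacher j x ^ (if bit n j then 1 else 0))"

definition walsh_coeff :: "(real \<Rightarrow> real) \<Rightarrow> nat \<Rightarrow> real" where
  "walsh_coeff f n = (LINT x:{0..<1}|lborel. f x * walsh n x)"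

definition walsh_partial_sum :: "(real \<Rightarrow> real) \<Rightarrow> nat \<Rightarrow> real \<Rightarrow> real" where
  "walsh_partial_sum f n x = (\<Sum>k<n. walsh_coeff f k * walsh k x)"

definition walsh_spec :: "(real \<Rightarrow> real) \<Rightarrow> nat set" where
  "walsh_spec P = {k. walsh_coeff P k \<noteq> 0}"

definition mu :: "nat \<Rightarrow> nat \<Rightarrow> nat \<Rightarrow> nat \<Rightarrow> nat" where
  "mu m \<gamma> v j = 2 ^ (m - \<gamma>) * v + 2 ^ (m - 2 * \<gamma>) * dyadic_sum v (2 ^ j)"

definition P_poly :: "nat \<Rightarrow> nat \<Rightarrow> real \<Rightarrow> real" where
  "P_poly m \<gamma> x = (1 / sqrt (real \<gamma>)) *
     (\<Sum>v<2 ^ \<gamma>. \<Sum>j<\<gamma>. walsh (mu m \<gamma> v j) x)"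

end

theory Submission
  imports Defs
begin

unbundle bit_operations_syntax





lemma powi_m1: "((-1::real) powi k) = (if even k then 1 else -1)"
  by (metis power_int_minus_left power_int_1_left)

lemma bit_high: "(n::nat) < 2^K \<Longrightarrow> K \<le> j \<Longrightarrow> \<not> bit n j"
  by (metis bit_take_bit_iff not_le take_bit_nat_eq_self)

lemma xor_less: "(a::nat) < 2^K \<Longrightarrow> b < 2^K \<Longrightarrow> a XOR b < 2^K"
  by (metis take_bit_nat_eq_self take_bit_nat_less_exp take_bit_xor)

lemma lt_pow_self: "(x::nat) \<le> M \<Longrightarrow> x < 2 ^ (M + 1)"
  proof -
  assume "x \<le> M"
  have "x < 2^x" by (rule less_exp)
  also have "(2::nat)^x \<le> 2^(M+1)" using \<open>x \<le> M\<close> by (intro power_increasing) auto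
  finally show ?thesis .
qed

lemma dyadic_sum_xor: "dyadic_sum n m = n XOR m"
proof -
  have "n XOR m < 2 ^ (max n m + 1)"
    using lt_pow_self[of n "max n m"] lt_pow_self[of m "max n m"] by (intro xor_less) auto
  hence "n XOR m = take_bit (max n m + 1) (n XOR m)" by (rule take_bit_nat_eq_self[symmetric])
  also have "\<dots> = (\<Sum>j<max n m + 1. (if bit n j = bit m j then 0 else 1) * 2 ^ j)"
    unfolding take_bit_sum by (rule sum.cong) (auto simp: bit_xor_iff push_bit_eq_mult)
  finally show ?thesis unfolding dyadic_sum_def by simp
qed

lemma sum_double: "sum f {..<(M::nat)+M} = sum f {..<M} + sum (\<lambda>i. f (i + M)) {..<M}"
proof -
  have "sum f {..<M+M} = sum f {0..<M} + sum f {0+M..<M+M}"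
    by (metis sum.atLeastLessThan_concat atLeast0LessThan le_add1 add_0)
  also have "sum f {0+M..<M+M} = sum (\<lambda>i. f (i + M)) {0..<M}"
    by (rule sum.shift_bounds_nat_ivl)
  finally show ?thesis by (simp add: atLeast0LessThan)
qed

lemma rad_val: "rademacher j x = (if even \<lfloor>2^(j+1)*x\<rfloor> then 1 else -1)"
  unfolding rademacher_def by (simp add: powi_m1)

lemma rad_sq: "rademacher j x * rademacher j x = 1"
  by (simp add: rad_val)

lemma rad_shift: "rademacher (Suc j) x = rademacher j (2*x)"
  unfolding rademacher_def by (simp add: mult.assoc)

lemma rad_add_one: "rademacher j (t+1) = rademacher j t"
proof -
  have "\<lfloor>2^(j+1)*(t+1)\<rfloor> = \<lfloor>2^(j+1)*t\<rfloor> + 2^(j+1)"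
  proof -
    have "(2::real)^(j+1)*(t+1) = 2^(j+1)*t + of_int (2^(j+1))" by (simp add: algebra_simps)
    thus ?thesis by (metis floor_add_int)
  qed
  thus ?thesis by (simp add: rad_val)
qed

lemma rad0_add_half: "rademacher 0 (y + 1/2) = - rademacher 0 y"
proof -
  have "\<lfloor>2^(0+1)*(y+1/2)\<rfloor> = \<lfloor>2^(0+1)*y\<rfloor> + 1"
  proof -
    have "(2::real)^(0+1)*(y+1/2) = 2^(0+1)*y + of_int 1" by (simp add: algebra_simps)
    thus ?thesis by (metis floor_add_int)
  qed
  thus ?thesis by (simp add: rad_val)
qed

lemma rad0_low: "0 \<le> z \<Longrightarrow> z < 1/2 \<Longrightarrow> rademacher 0 z = 1"
proof -
  assume "0 \<le> z" "z < 1/2"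
  hence "\<lfloor>2^(0+1)*z\<rfloor> = 0" by (simp add: floor_eq_iff)
  thus ?thesis by (simp add: rad_val)
qed

lemma walsh_K:
  assumes "n < 2^K"
  shows "walsh n x = (\<Prod>j<K. rademacher j x ^ (if bit n j then 1 else 0))"
proof -
  let ?g = "\<lambda>j. rademacher j x ^ (if bit n j then 1 else 0)"
  let ?M = "max K (n+1)"
  have "prod ?g {..<n+1} = prod ?g {..<?M}"
    by (rule prod.mono_neutral_left) (auto simp: bit_high[OF lt_pow_self[of n n]])
  moreover have "prod ?g {..<K} = prod ?g {..<?M}"
    by (rule prod.mono_neutral_left) (auto simp: bit_high[OF assms])
  ultimately show ?thesis unfolding walsh_def by simp
qed

lemma walsh_0: "walsh 0 x = 1"
  unfolding walsh_def by simp

lemma walsh_xor: "walsh (a XOR b) x = walsh a x * walsh b x"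
proof -
  define K where "K = max a b + 1"
  have a: "a < 2^K" and b: "b < 2^K" unfolding K_def by (rule lt_pow_self, simp)+
  have ab: "a XOR b < 2^K" by (rule xor_less[OF a b])
  show ?thesis
    unfolding walsh_K[OF a] walsh_K[OF b] walsh_K[OF ab] prod.distrib[symmetric]
    by (rule prod.cong) (auto simp: bit_xor_iff rad_sq)
qed

lemma walsh_sq: "walsh n x * walsh n x = 1"
  by (metis walsh_xor xor_self_eq walsh_0)

lemma walsh_abs: "\<bar>walsh n x\<bar> = 1"
proof -
  have "\<bar>walsh n x\<bar> * \<bar>walsh n x\<bar> = 1" using walsh_sq[of n x] by (metis abs_mult abs_1)
  thus ?thesis by (metis abs_ge_zero abs_mult_self_eq mult_cancel_right1 real_sqrt_abs2 real_sqrt_one)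
qed

lemma walsh_rec: "walsh n z = (if odd n then rademacher 0 z else 1) * walsh (n div 2) (2*z)"
proof -
  define K where "K = n + 1"
  have n: "n < 2^(Suc K)" unfolding K_def by (metis lt_pow_self le_refl Suc_eq_plus1 less_trans less_exp Suc_lessD)
  have n2: "n div 2 < 2^K" using n by simp
  show ?thesis
    unfolding walsh_K[OF n] walsh_K[OF n2] prod.lessThan_Suc_shift
    by (simp add: rad_shift bit_Suc bit_0)
qed

lemma walsh_add_one: "walsh n (t+1) = walsh n t"
proof -
  define K where "K = n + 1"
  have n: "n < 2^K" unfolding K_def by (rule lt_pow_self) simp
  show ?thesis unfolding walsh_K[OF n] by (simp add: rad_add_one)
qed

lemma walsh_add_half: "walsh n (y + 1/2) = (if odd n then -1 else 1) * walsh n y"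
proof -
  have "walsh (n div 2) (2*(y+1/2)) = walsh (n div 2) (2*y)"
    using walsh_add_one[of "n div 2" "2*y"] by (simp add: algebra_simps)
  thus ?thesis by (subst (1 2) walsh_rec) (simp add: rad0_add_half)
qed

lemma walsh_disc_orth:
  "n < 2^N \<Longrightarrow> (\<Sum>i<2^N. walsh n (real i / 2^N)) = (if n = 0 then 2^N else 0)"
proof (induction N arbitrary: n)
  case 0
  thus ?case by (simp add: walsh_0)
next
  case (Suc N)
  have half: "walsh n (real i / 2^Suc N) = walsh (n div 2) (real i / 2^N)"
    if "i < 2^N" for i
  proof -
    have "real i / 2^Suc N < 1/2" using that by (simp add: field_simps)
    moreover have "0 \<le> real i / 2^Suc N" by simp
    ultimately show ?thesis by (subst walsh_rec) (simp add: rad0_low)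
  qed
  have shift: "walsh n (real (i + 2^N) / 2^Suc N) = (if odd n then -1 else 1) * walsh n (real i / 2^Suc N)" for i
  proof -
    have "real (i + 2^N) / 2^Suc N = real i / 2^Suc N + 1/2" by (simp add: field_simps)
    thus ?thesis by (simp add: walsh_add_half)
  qed
  have two: "(2::nat)^Suc N = 2^N + 2^N" by simp
  have "(\<Sum>i<2^Suc N. walsh n (real i / 2^Suc N))
      = (\<Sum>i<2^N. walsh n (real i / 2^Suc N)) + (\<Sum>i<2^N. walsh n (real (i + 2^N) / 2^Suc N))"
    using sum_double[of "\<lambda>i. walsh n (real i / 2^Suc N)" "2^N", folded two] by (simp only:)
  also have "\<dots> = (\<Sum>i<2^N. walsh n (real i / 2^Suc N)) + (if odd n then -1 else 1) * (\<Sum>i<2^N. walsh n (real i / 2^Suc N))"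
    by (simp only: shift sum_distrib_left[symmetric])
  also have "\<dots> = (1 + (if odd n then -1 else 1)) * (\<Sum>i<2^N. walsh n (real i / 2^Suc N))"
    by (simp only: distrib_right mult_1_left)
  also have "(\<Sum>i<2^N. walsh n (real i / 2^Suc N)) = (\<Sum>i<2^N. walsh (n div 2) (real i / 2^N))"
    by (rule sum.cong) (simp_all only: half lessThan_iff)
  also have "\<dots> = (if n div 2 = 0 then 2^N else 0)"
    using Suc.prems by (intro Suc.IH) simp
  finally have eq: "(\<Sum>i<2^Suc N. walsh n (real i / 2^Suc N)) = (1 + (if odd n then -1 else 1)) * (if n div 2 = 0 then 2^N else 0)" .
  show ?case
  proof (cases "odd n")
    case True
    hence "n \<noteq> 0" by (metis odd_pos not_gr_zero)
    thus ?thesis using eq True by simp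
  next
    case False
    hence "n div 2 = 0 \<longleftrightarrow> n = 0" by auto
    thus ?thesis using eq False by simp
  qed
qed

lemma floor_pow_div:
  fixes x :: real
  assumes "j < N"
  shows "\<lfloor>2^(j+1) * x\<rfloor> = \<lfloor>2^(j+1) * (real_of_int \<lfloor>2^N * x\<rfloor> / 2^N)\<rfloor>"
proof -
  define d :: nat where "d = 2^(N - (j+1))"
  have "(2::real)^N = 2^((j+1) + (N-(j+1)))" using assms by simp
  hence N: "(2::real)^N = 2^(j+1) * real d"
    unfolding d_def power_add by simp
  have d0: "real d > 0" unfolding d_def by simp
  have "2^(j+1) * x = (2^N * x) / real_of_int (int d)" using N d0 by (simp add: field_simps)
  hence "\<lfloor>2^(j+1) * x\<rfloor> = \<lfloor>2^N * x\<rfloor> div int d"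
    using floor_divide_real_eq_div[of "int d" "2^N*x"] by (simp only:)
  moreover have "2^(j+1) * (real_of_int \<lfloor>2^N * x\<rfloor> / 2^N) = real_of_int \<lfloor>2^N * x\<rfloor> / real_of_int (int d)"
    using N d0 by (simp add: field_simps)
  hence "\<lfloor>2^(j+1) * (real_of_int \<lfloor>2^N * x\<rfloor> / 2^N)\<rfloor> = \<lfloor>2^N * x\<rfloor> div int d"
    by (simp only: floor_divide_of_int_eq)
  ultimately show ?thesis by simp
qed

lemma walsh_step: "n < 2^N \<Longrightarrow> walsh n x = walsh n (real_of_int \<lfloor>2^N * x\<rfloor> / 2^N)"
  unfolding walsh_K[of n N]
proof (rule prod.cong)
  fix j assume "j \<in> {..<N}"
  hence "rademacher j x = rademacher j (real_of_int \<lfloor>2^N * x\<rfloor> / 2^N)"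
    unfolding rademacher_def by (simp only: floor_pow_div[of j N x] lessThan_iff)
  thus "rademacher j x ^ (if bit n j then 1 else 0) =
        rademacher j (real_of_int \<lfloor>2^N * x\<rfloor> / 2^N) ^ (if bit n j then 1 else 0)" by simp
qed simp



lemma step_integral:
  fixes f :: "real \<Rightarrow> real"
  assumes step: "\<And>x. 0 \<le> x \<Longrightarrow> x < 1 \<Longrightarrow> f x = f (real_of_int \<lfloor>2^N*x\<rfloor> / 2^N)"
  shows "set_integrable lborel {0..<1} f \<and>
         (LINT x:{0..<1}|lborel. f x) = (\<Sum>i<2^N. f (real i / 2^N)) / 2^N"
proof -
  let ?I = "\<lambda>i::nat. {real i / 2^N..<(real i + 1) / 2^N}"
  have eq: "indicator {0..<1} x *\<^sub>R f x = (\<Sum>i<2^N. f (real i / 2^N) * indicator (?I i) x)" for x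
  proof (cases "0 \<le> x \<and> x < 1")
    case True
    define i0 where "i0 = nat \<lfloor>2^N * x\<rfloor>"
    have fl0: "0 \<le> \<lfloor>2^N * x\<rfloor>" using True by simp
    have i0r: "real i0 = real_of_int \<lfloor>2^N * x\<rfloor>" unfolding i0_def using fl0 by simp
    have "real_of_int \<lfloor>2^N * x\<rfloor> \<le> 2^N * x" by (rule of_int_floor_le)
    moreover have "2^N * x < real_of_int \<lfloor>2^N * x\<rfloor> + 1" by (rule real_of_int_floor_add_one_gt)
    ultimately have lo: "real i0 / 2^N \<le> x" and hi: "x < (real i0 + 1) / 2^N"
      using i0r by (simp_all add: field_simps)
    have "2^N * x < 2^N" using True by simp
    hence "real i0 < 2^N" using i0r \<open>real_of_int \<lfloor>2^N * x\<rfloor> \<le> 2^N * x\<close> by linarith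
    hence i0lt: "i0 < 2^N" by (metis of_nat_less_iff of_nat_numeral of_nat_power)
    have uniq: "x \<in> ?I i \<longleftrightarrow> i = i0" for i
    proof
      assume "x \<in> ?I i"
      hence "real i \<le> 2^N * x" "2^N * x < real i + 1" by (auto simp: field_simps)
      hence "\<lfloor>2^N * x\<rfloor> = int i" by (simp add: floor_eq_iff)
      thus "i = i0" unfolding i0_def by simp
    qed (use lo hi in auto)
    have "(\<Sum>i<2^N. f (real i / 2^N) * indicator (?I i) x) = (\<Sum>i<2^N. if i = i0 then f (real i0 / 2^N) else 0)"
    proof (rule sum.cong)
      fix i show "f (real i / 2^N) * indicator (?I i) x = (if i = i0 then f (real i0 / 2^N) else 0)"
        using uniq[of i] unfolding indicator_def by auto
    qed simp
    also have "\<dots> = f (real i0 / 2^N)" using i0lt by simp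
    also have "\<dots> = f x" using step[of x] True i0r by simp
    finally show ?thesis using True by simp
  next
    case False
    have "x \<notin> ?I i" if "i < 2^N" for i
    proof
      assume "x \<in> ?I i"
      hence a: "real i / 2^N \<le> x" "x < (real i + 1) / 2^N" by auto
      have "real i + 1 \<le> 2^N" using that
        by (metis Suc_leI of_nat_Suc of_nat_le_iff of_nat_numeral of_nat_power add.commute)
      hence "(real i + 1) / 2^N \<le> 1" by simp
      moreover have "0 \<le> real i / 2^N" by simp
      ultimately show False using a False by linarith
    qed
    thus ?thesis using False by (auto intro!: sum.neutral)
  qed
  have intI: "integrable lborel (\<lambda>x. f (real i / 2^N) * indicator (?I i) x)" for i
  proof (intro integrable_mult_right integrable_real_indicator)
    show "?I i \<in> sets lborel" by simp
    have "real i / 2^N \<le> (real i + 1) / 2^N" by (simp add: divide_right_mono)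
    thus "emeasure lborel (?I i) < \<infinity>" by simp
  qed
  have int: "integrable lborel (\<lambda>x. \<Sum>i<2^N. f (real i / 2^N) * indicator (?I i) x)"
    by (rule Bochner_Integration.integrable_sum[OF intI])
  have mes: "integral\<^sup>L lborel (\<lambda>x. f (real i / 2^N) * indicator (?I i) x) = f (real i / 2^N) * (1 / 2^N)" for i
  proof -
    have "real i / 2^N \<le> (real i + 1) / 2^N" by (simp add: divide_right_mono)
    moreover have "(real i + 1) / 2^N - real i / 2^N = 1 / 2^N" by (simp add: field_simps)
    ultimately have "measure lborel (?I i) = 1 / 2^N" by simp
    thus ?thesis by simp
  qed
  have "set_integrable lborel {0..<1} f"
    unfolding set_integrable_def eq using int .
  moreover have "(LINT x:{0..<1}|lborel. f x) = (\<Sum>i<2^N. f (real i / 2^N) * (1 / 2^N))"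
    unfolding set_lebesgue_integral_def eq
    by (simp only: Bochner_Integration.integral_sum[OF intI] mes)
  moreover have "(\<Sum>i<2^N. f (real i / 2^N) * (1 / 2^N)) = (\<Sum>i<2^N. f (real i / 2^N)) / 2^N"
    by (simp add: sum_divide_distrib)
  ultimately show ?thesis by simp
qed




lemma xor_cancel: "((a::nat) XOR b) XOR b = a"
  by (rule bit_eqI) (auto simp: bit_xor_iff)

lemma xor_eq0: "(a::nat) XOR b = 0 \<longleftrightarrow> a = b"
proof
  assume h: "a XOR b = 0"
  have "a = (a XOR b) XOR b" by (simp only: xor_cancel)
  thus "a = b" using h by simp
qed simp

lemma mult_xor: "(2^s * a) XOR (2^s * b) = (2^s * (a XOR b) :: nat)"
  using push_bit_xor[of s a b] by (simp add: push_bit_eq_mult mult.commute)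

lemma add_disj_xor:
  assumes "(e::nat) < 2^s"
  shows "2^s * v + e = (2^s * v) XOR e"
proof (rule disjunctive_add_eq_xor)
  show "2^s * v AND e = 0"
  proof (rule bit_eqI)
    fix n
    have "\<not> (bit (2^s * v) n \<and> bit e n)"
    proof
      assume h: "bit (2^s * v) n \<and> bit e n"
      hence "s \<le> n" using bit_push_bit_iff_nat[of s v n] by (simp add: push_bit_eq_mult mult.commute)
      thus False using h bit_high[OF assms] by blast
    qed
    thus "bit (2^s * v AND e) n = bit 0 n" by (simp add: bit_and_iff)
  qed
qed

lemma xor_pow_lt: "((V::nat) XOR 2^j < V) \<longleftrightarrow> bit V j"
proof (cases "bit V j")
  case True
  have "(V XOR 2^j) AND 2^j = 0" using True by (intro bit_eqI) (auto simp: bit_and_iff bit_xor_iff bit_exp_iff)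
  hence "(V XOR 2^j) + 2^j = (V XOR 2^j) XOR 2^j" by (rule disjunctive_add_eq_xor)
  hence "(V XOR 2^j) + 2^j = V" by (simp add: xor_cancel)
  thus ?thesis using True by (metis less_add_same_cancel1 zero_less_power pos2)
next
  case False
  have "V AND 2^j = 0" using False by (intro bit_eqI) (auto simp: bit_and_iff bit_exp_iff)
  hence "V + 2^j = V XOR 2^j" by (rule disjunctive_add_eq_xor)
  thus ?thesis using False by (metis not_add_less1)
qed

lemma bit_sum_pow: "finite J \<Longrightarrow> bit (\<Sum>j\<in>J. 2^j :: nat) i \<longleftrightarrow> i \<in> J"
proof (induction J arbitrary: i rule: finite_induct)
  case empty
  then show ?case by simp
next
  case (insert a J)
  have "(2::nat)^a AND (\<Sum>j\<in>J. 2^j) = 0"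
    using insert.hyps insert.IH[of a] by (intro bit_eqI) (auto simp: bit_and_iff bit_exp_iff)
  hence "(\<Sum>j\<in>insert a J. 2^j :: nat) = 2^a XOR (\<Sum>j\<in>J. 2^j)"
    using insert by (simp add: disjunctive_add_eq_xor)
  thus ?case using insert.hyps insert.IH[of i] insert.IH[of a] by (auto simp: bit_xor_iff bit_exp_iff)
qed

lemma sum_pow_less: "J \<subseteq> {..<g} \<Longrightarrow> (\<Sum>j\<in>J. 2^j :: nat) < 2^g"
proof -
  assume "J \<subseteq> {..<g}"
  hence "(\<Sum>j\<in>J. 2^j :: nat) \<le> (\<Sum>j<g. 2^j)" by (intro sum_mono2) auto
  also have "(\<Sum>j<g. 2^j :: nat) < 2^g" by (induction g) auto
  finally show ?thesis .
qed






lemma mu_alt: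
  assumes "2*\<gamma> < m" "v < 2^\<gamma>"
  shows "mu m \<gamma> v j = 2^(m-2*\<gamma>) * (2^\<gamma> * v + (v XOR 2^j))"
proof -
  have "m - \<gamma> = (m - 2*\<gamma>) + \<gamma>" using assms by simp
  hence "(2::nat)^(m-\<gamma>) = 2^(m-2*\<gamma>) * 2^\<gamma>" by (simp only: power_add)
  thus ?thesis unfolding mu_def dyadic_sum_xor by (simp only: distrib_left mult.assoc)
qed

lemma e_less: "(v::nat) < 2^\<gamma> \<Longrightarrow> j < \<gamma> \<Longrightarrow> v XOR 2^j < 2^\<gamma>"
  by (intro xor_less) auto

lemma mu_lt:
  assumes "2*\<gamma> < m" "v < 2^\<gamma>" "j < \<gamma>"
  shows "mu m \<gamma> v j < 2^m"
proof -
  have e: "v XOR 2^j < 2^\<gamma>" using e_less assms by blast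
  have "2^\<gamma> * v + (v XOR 2^j) < 2^\<gamma> * v + 2^\<gamma>" using e by simp
  also have "\<dots> = 2^\<gamma> * (v + 1)" by simp
  also have "\<dots> \<le> 2^\<gamma> * 2^\<gamma>" using assms by (intro mult_le_mono2) simp
  finally have "2^\<gamma> * v + (v XOR 2^j) < 2^\<gamma> * 2^\<gamma>" .
  hence "mu m \<gamma> v j < 2^(m-2*\<gamma>) * (2^\<gamma> * 2^\<gamma>)"
    unfolding mu_alt[OF assms(1,2)] by simp
  also have "\<dots> = 2^m" using assms(1) by (simp flip: power_add)
  finally show ?thesis .
qed

lemma mu_walsh:
  assumes "2*\<gamma> < m" "v < 2^\<gamma>" "j < \<gamma>"
  shows "walsh (mu m \<gamma> v j) x =
    walsh (2^(m-\<gamma>) * v) x * walsh (2^(m-2*\<gamma>) * v) x * walsh (2^(m-2*\<gamma>+j)) x"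
proof -
  let ?k = "m - 2*\<gamma>"
  have e: "v XOR 2^j < 2^\<gamma>" using e_less assms by blast
  have mg: "m - \<gamma> = ?k + \<gamma>" using assms by simp
  have "2^?k * (v XOR 2^j) < 2^(m-\<gamma>)" unfolding mg power_add using e by simp
  hence "mu m \<gamma> v j = (2^(m-\<gamma>) * v) XOR (2^?k * (v XOR 2^j))"
    unfolding mu_def dyadic_sum_xor by (rule add_disj_xor)
  also have "2^?k * (v XOR 2^j) = (2^?k * v) XOR (2^?k * 2^j)" by (simp only: mult_xor)
  finally show ?thesis by (simp add: walsh_xor power_add mult.assoc)
qed

lemma mu_inj:
  assumes "2*\<gamma> < m" "v < 2^\<gamma>" "j < \<gamma>" "v' < 2^\<gamma>" "j' < \<gamma>"
    and eq: "mu m \<gamma> v j = mu m \<gamma> v' j'"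
  shows "v = v' \<and> j = j'"
proof -
  have e: "v XOR 2^j < 2^\<gamma>" "v' XOR 2^j' < 2^\<gamma>" using e_less assms by blast+
  have "2^\<gamma> * v + (v XOR 2^j) = 2^\<gamma> * v' + (v' XOR 2^j')"
    using eq unfolding mu_alt[OF assms(1,2)] mu_alt[OF assms(1,4)] by simp
  hence "(2^\<gamma> * v + (v XOR 2^j)) div 2^\<gamma> = (2^\<gamma> * v' + (v' XOR 2^j')) div 2^\<gamma>"
    and "(2^\<gamma> * v + (v XOR 2^j)) mod 2^\<gamma> = (2^\<gamma> * v' + (v' XOR 2^j')) mod 2^\<gamma>" by simp_all
  hence a: "v = v'" and b: "v XOR 2^j = v' XOR 2^j'" using e by simp_all
  from b a have "v XOR (v XOR 2^j) = v XOR (v XOR 2^j')" by simp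
  hence "(2::nat)^j = 2^j'" by (metis xor_cancel xor.commute)
  hence "j = j'" by simp
  with a show ?thesis by simp
qed

lemma P_step:
  assumes "2*\<gamma> < m" "m \<le> N"
  shows "P_poly m \<gamma> x = P_poly m \<gamma> (real_of_int \<lfloor>2^N * x\<rfloor> / 2^N)"
proof -
  have eq: "walsh (mu m \<gamma> v j) x = walsh (mu m \<gamma> v j) (real_of_int \<lfloor>2^N * x\<rfloor> / 2^N)"
    if "v < 2^\<gamma>" "j < \<gamma>" for v j
  proof -
    have "mu m \<gamma> v j < 2^m" using mu_lt assms that by simp
    also have "(2::nat)^m \<le> 2^N" using assms by simp
    finally show ?thesis by (rule walsh_step)
  qed
  have "(\<Sum>v<2^\<gamma>. \<Sum>j<\<gamma>. walsh (mu m \<gamma> v j) x) =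
        (\<Sum>v<2^\<gamma>. \<Sum>j<\<gamma>. walsh (mu m \<gamma> v j) (real_of_int \<lfloor>2^N * x\<rfloor> / 2^N))"
    by (intro sum.cong refl) (simp add: eq)
  thus ?thesis unfolding P_poly_def by simp
qed


lemma swap3:
  "(\<Sum>i\<in>A. \<Sum>p\<in>I. \<Sum>q\<in>J. g i p q) = (\<Sum>p\<in>I. \<Sum>q\<in>J. \<Sum>i\<in>A. g i p q)"
proof -
  have "(\<Sum>i\<in>A. \<Sum>p\<in>I. \<Sum>q\<in>J. g i p q) = (\<Sum>p\<in>I. \<Sum>i\<in>A. \<Sum>q\<in>J. g i p q)"
    by (rule sum.swap)
  also have "\<dots> = (\<Sum>p\<in>I. \<Sum>q\<in>J. \<Sum>i\<in>A. g i p q)"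
    by (rule sum.cong[OF refl]) (rule sum.swap)
  finally show ?thesis .
qed

lemma disc_orth2:
  assumes "a < 2^N" "b < 2^N"
  shows "(\<Sum>i<2^N. walsh a (real i / 2^N) * walsh b (real i / 2^N)) = 2^N * of_bool (a = b)"
proof -
  have "(\<Sum>i<2^N. walsh a (real i / 2^N) * walsh b (real i / 2^N)) = (\<Sum>i<2^N. walsh (a XOR b) (real i / 2^N))"
    by (simp add: walsh_xor)
  also have "\<dots> = (if a XOR b = 0 then 2^N else 0)"
    by (rule walsh_disc_orth[OF xor_less[OF assms]])
  finally show ?thesis by (simp add: xor_eq0)
qed

lemma n_less_pow: "(n::nat) < 2^(m+n)"
proof -
  have "n < 2^n" by (rule less_exp)
  also have "(2::nat)^n \<le> 2^(m+n)" by (rule power_increasing) auto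
  finally show ?thesis .
qed

lemma coeff:
  assumes "2*\<gamma> < m"
  shows "walsh_coeff (P_poly m \<gamma>) n = (1 / sqrt \<gamma>) * (\<Sum>v<2^\<gamma>. \<Sum>j<\<gamma>. of_bool (mu m \<gamma> v j = n))"
proof -
  define N where "N = m + n"
  have nN: "n < 2^N" unfolding N_def by (rule n_less_pow)
  have mN: "m \<le> N" unfolding N_def by simp
  have muN: "mu m \<gamma> v j < 2^N" if "v < 2^\<gamma>" "j < \<gamma>" for v j
  proof -
    have "mu m \<gamma> v j < 2^m" using mu_lt assms that by simp
    also have "(2::nat)^m \<le> 2^N" unfolding N_def by simp
    finally show ?thesis .
  qed
  let ?f = "\<lambda>x. P_poly m \<gamma> x * walsh n x"
  have "?f x = ?f (real_of_int \<lfloor>2^N * x\<rfloor> / 2^N)" for x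
    using P_step[OF assms mN, of x] walsh_step[OF nN, of x] by (simp only:)
  hence st: "(LINT x:{0..<1}|lborel. ?f x) = (\<Sum>i<2^N. ?f (real i / 2^N)) / 2^N"
    using step_integral[of ?f N] by blast
  have "(\<Sum>i<2^N. ?f (real i / 2^N)) =
      (\<Sum>i<2^N. (1 / sqrt \<gamma>) * (\<Sum>v<2^\<gamma>. \<Sum>j<\<gamma>. walsh (mu m \<gamma> v j) (real i / 2^N) * walsh n (real i / 2^N)))"
    unfolding P_poly_def by (simp add: sum_distrib_right mult.assoc)
  also have "\<dots> = (1 / sqrt \<gamma>) * (\<Sum>i<2^N. \<Sum>v<2^\<gamma>. \<Sum>j<\<gamma>. walsh (mu m \<gamma> v j) (real i / 2^N) * walsh n (real i / 2^N))"
    by (simp only: sum_distrib_left[symmetric])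
  also have "\<dots> = (1 / sqrt \<gamma>) * (\<Sum>v<2^\<gamma>. \<Sum>j<\<gamma>. \<Sum>i<2^N. walsh (mu m \<gamma> v j) (real i / 2^N) * walsh n (real i / 2^N))"
    by (rule arg_cong[where f="\<lambda>t. (1 / sqrt \<gamma>) * t"], rule swap3)
  also have "\<dots> = (1 / sqrt \<gamma>) * (\<Sum>v<2^\<gamma>. \<Sum>j<\<gamma>. 2^N * of_bool (mu m \<gamma> v j = n))"
    by (intro arg_cong[where f="\<lambda>t. (1 / sqrt \<gamma>) * t"] sum.cong refl disc_orth2 muN nN) auto
  also have "\<dots> = 2^N * ((1 / sqrt \<gamma>) * (\<Sum>v<2^\<gamma>. \<Sum>j<\<gamma>. of_bool (mu m \<gamma> v j = n)))"
    by (simp add: sum_distrib_left mult_ac)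
  finally show ?thesis unfolding walsh_coeff_def st by simp
qed

lemma psum:
  assumes "2*\<gamma> < m"
  shows "walsh_partial_sum (P_poly m \<gamma>) l x =
    (1 / sqrt \<gamma>) * (\<Sum>v<2^\<gamma>. \<Sum>j<\<gamma>. if mu m \<gamma> v j < l then walsh (mu m \<gamma> v j) x else 0)"
proof -
  have "walsh_partial_sum (P_poly m \<gamma>) l x =
     (\<Sum>k<l. (1 / sqrt \<gamma>) * (\<Sum>v<2^\<gamma>. \<Sum>j<\<gamma>. of_bool (mu m \<gamma> v j = k) * walsh k x))"
    unfolding walsh_partial_sum_def coeff[OF assms] by (simp add: sum_distrib_right mult.assoc)
  also have "\<dots> = (1 / sqrt \<gamma>) * (\<Sum>k<l. \<Sum>v<2^\<gamma>. \<Sum>j<\<gamma>. of_bool (mu m \<gamma> v j = k) * walsh k x)"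
    by (simp only: sum_distrib_left[symmetric])
  also have "\<dots> = (1 / sqrt \<gamma>) * (\<Sum>v<2^\<gamma>. \<Sum>j<\<gamma>. \<Sum>k<l. of_bool (mu m \<gamma> v j = k) * walsh k x)"
    by (rule arg_cong[where f="\<lambda>t. (1 / sqrt \<gamma>) * t"], rule swap3)
  also have "\<dots> = (1 / sqrt \<gamma>) * (\<Sum>v<2^\<gamma>. \<Sum>j<\<gamma>. if mu m \<gamma> v j < l then walsh (mu m \<gamma> v j) x else 0)"
  proof -
    have "(\<Sum>k<l. of_bool (a = k) * walsh k x) = (if a < l then walsh a x else 0)" for a
    proof -
      have "(\<Sum>k<l. of_bool (a = k) * walsh k x) = (\<Sum>k<l. if a = k then walsh k x else 0)"
        by (intro sum.cong) auto
      thus ?thesis by simp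
    qed
    thus ?thesis by simp
  qed
  finally show ?thesis .
qed

lemma spec:
  assumes "2*\<gamma> < m" "walsh_coeff (P_poly m \<gamma>) n \<noteq> 0"
  shows "\<exists>v<2^\<gamma>. \<exists>j<\<gamma>. mu m \<gamma> v j = n"
proof (rule ccontr)
  assume "\<not> ?thesis"
  hence "(\<Sum>v<2^\<gamma>. \<Sum>j<\<gamma>. of_bool (mu m \<gamma> v j = n) :: real) = 0"
    by (intro sum.neutral ballI) auto
  thus False using assms coeff[OF assms(1), of n] by simp
qed





definition FF :: "nat \<Rightarrow> nat \<Rightarrow> real \<Rightarrow> real" where
  "FF m \<gamma> x = (\<Sum>v<2^\<gamma>. walsh (2^(m-\<gamma>) * v) x * walsh (2^(m-2*\<gamma>) * v) x)"

definition RR :: "nat \<Rightarrow> nat \<Rightarrow> real \<Rightarrow> real" where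
  "RR m \<gamma> x = (\<Sum>j<\<gamma>. walsh (2^(m-2*\<gamma>+j)) x)"

lemma P_factor:
  assumes "2*\<gamma> < m"
  shows "P_poly m \<gamma> x = (1 / sqrt \<gamma>) * FF m \<gamma> x * RR m \<gamma> x"
proof -
  have "(\<Sum>v<2^\<gamma>. \<Sum>j<\<gamma>. walsh (mu m \<gamma> v j) x) =
        (\<Sum>v<2^\<gamma>. \<Sum>j<\<gamma>. (walsh (2^(m-\<gamma>) * v) x * walsh (2^(m-2*\<gamma>) * v) x) * walsh (2^(m-2*\<gamma>+j)) x)"
    by (intro sum.cong refl) (simp add: mu_walsh assms)
  also have "\<dots> = FF m \<gamma> x * RR m \<gamma> x"
    unfolding FF_def RR_def by (simp only: sum_product)
  finally show ?thesis unfolding P_poly_def by simp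
qed

lemma xor_cancel2: "(a::nat) XOR (a XOR b) = b"
  by (rule bit_eqI) (auto simp: bit_xor_iff)

lemma G_mult:
  "walsh (2^s * v) x * walsh (2^k * v) x * (walsh (2^s * v') x * walsh (2^k * v') x)
   = walsh (2^s * (v XOR v')) x * walsh (2^k * (v XOR v')) x"
  unfolding mult_xor[symmetric] walsh_xor by (simp only: mult_ac)

lemma F_sq:
  "FF m \<gamma> x * FF m \<gamma> x = 2^\<gamma> * FF m \<gamma> x"
proof -
  let ?G = "\<lambda>u. walsh (2^(m-\<gamma>) * u) x * walsh (2^(m-2*\<gamma>) * u) x"
  have "FF m \<gamma> x * FF m \<gamma> x = (\<Sum>v<2^\<gamma>. \<Sum>v'<2^\<gamma>. ?G v * ?G v')"
    unfolding FF_def by (rule sum_product)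
  also have "\<dots> = (\<Sum>v<2^\<gamma>. \<Sum>v'<2^\<gamma>. ?G (v XOR v'))"
    by (simp only: G_mult)
  also have "\<dots> = (\<Sum>v<(2::nat)^\<gamma>. FF m \<gamma> x)"
  proof (rule sum.cong[OF refl])
    fix v assume v: "v \<in> {..<(2::nat)^\<gamma>}"
    show "(\<Sum>v'<2^\<gamma>. ?G (v XOR v')) = FF m \<gamma> x"
      unfolding FF_def
      by (rule sum.reindex_bij_witness[where i="\<lambda>u. v XOR u" and j="\<lambda>u. v XOR u"])
         (use v in \<open>auto simp: xor_cancel2 intro: xor_less\<close>)
  qed
  also have "\<dots> = 2^\<gamma> * FF m \<gamma> x" by simp
  finally show ?thesis .
qed

lemma F_vals: "FF m \<gamma> x = 0 \<or> FF m \<gamma> x = 2^\<gamma>"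
proof -
  have "FF m \<gamma> x * (FF m \<gamma> x - 2^\<gamma>) = 0" using F_sq[of m \<gamma> x] by (simp add: algebra_simps)
  thus ?thesis by simp
qed

lemma sumF:
  assumes "1 \<le> \<gamma>" "2*\<gamma> < m"
  shows "(\<Sum>i<2^m. FF m \<gamma> (real i / 2^m)) = 2^m"
proof -
  let ?s = "m - \<gamma>" and ?k = "m - 2*\<gamma>"
  have lt: "2^?s * v < 2^m" "2^?k * v < 2^m" if "v < 2^\<gamma>" for v :: nat
  proof -
    have "2^?s * v < 2^?s * 2^\<gamma>" using that by simp
    also have "\<dots> = 2^m" using assms by (simp flip: power_add)
    finally show "2^?s * v < 2^m" .
    have "2^?k * v < 2^?k * 2^\<gamma>" using that by simp
    also have "\<dots> \<le> 2^?s * 2^\<gamma>" using assms by simp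
    also have "\<dots> = 2^m" using assms by (simp flip: power_add)
    finally show "2^?k * v < 2^m" .
  qed
  have eq0: "(2^?s * v = 2^?k * (v::nat)) \<longleftrightarrow> v = 0" for v
  proof
    assume h: "2^?s * v = 2^?k * v"
    show "v = 0"
    proof (rule ccontr)
      assume "v \<noteq> 0"
      hence "(2::nat)^?s = 2^?k" using h by simp
      hence "?s = ?k" by simp
      thus False using assms by simp
    qed
  qed simp
  have "(\<Sum>i<2^m. FF m \<gamma> (real i / 2^m)) =
        (\<Sum>i<2^m. \<Sum>v<2^\<gamma>. walsh (2^?s * v) (real i / 2^m) * walsh (2^?k * v) (real i / 2^m))"
    unfolding FF_def ..
  also have "\<dots> = (\<Sum>v<2^\<gamma>. \<Sum>i<2^m. walsh (2^?s * v) (real i / 2^m) * walsh (2^?k * v) (real i / 2^m))"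
    by (rule sum.swap)
  also have "\<dots> = (\<Sum>v<(2::nat)^\<gamma>. 2^m * of_bool (v = 0))"
    by (rule sum.cong[OF refl]) (simp only: disc_orth2 lt eq0 lessThan_iff)
  also have "\<dots> = 2^m" by simp
  finally show ?thesis .
qed

lemma sumP2:
  assumes "1 \<le> \<gamma>" "2*\<gamma> < m"
  shows "(\<Sum>i<2^m. P_poly m \<gamma> (real i / 2^m) * P_poly m \<gamma> (real i / 2^m)) = 2^m * 2^\<gamma>"
proof -
  let ?I = "{..<(2::nat)^\<gamma>} \<times> {..<\<gamma>}"
  let ?f = "\<lambda>p. mu m \<gamma> (fst p) (snd p)"
  let ?c = "1 / sqrt \<gamma>"
  have P_eq: "P_poly m \<gamma> y = ?c * (\<Sum>p\<in>?I. walsh (?f p) y)" for y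
    unfolding P_poly_def sum.cartesian_product by (simp add: case_prod_beta)
  have flt: "?f p < 2^m" if "p \<in> ?I" for p using that mu_lt assms by auto
  have finj: "?f p = ?f q \<longleftrightarrow> p = q" if "p \<in> ?I" "q \<in> ?I" for p q
    using that mu_inj[OF assms(2), of "fst p" "snd p" "fst q" "snd q"] by (auto simp: prod_eq_iff)
  have "(\<Sum>i<2^m. P_poly m \<gamma> (real i / 2^m) * P_poly m \<gamma> (real i / 2^m)) =
     (\<Sum>i<2^m. ?c * ?c * (\<Sum>p\<in>?I. \<Sum>q\<in>?I. walsh (?f p) (real i / 2^m) * walsh (?f q) (real i / 2^m)))"
    unfolding P_eq by (simp only: sum_product mult_ac)
  also have "\<dots> = ?c * ?c * (\<Sum>i<2^m. \<Sum>p\<in>?I. \<Sum>q\<in>?I. walsh (?f p) (real i / 2^m) * walsh (?f q) (real i / 2^m))"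
    by (simp only: sum_distrib_left[symmetric])
  also have "\<dots> = ?c * ?c * (\<Sum>p\<in>?I. \<Sum>q\<in>?I. \<Sum>i<2^m. walsh (?f p) (real i / 2^m) * walsh (?f q) (real i / 2^m))"
    by (rule arg_cong[where f="\<lambda>t. ?c * ?c * t"], rule swap3)
  also have "\<dots> = ?c * ?c * (\<Sum>p\<in>?I. \<Sum>q\<in>?I. 2^m * of_bool (p = q))"
    by (intro arg_cong[where f="\<lambda>t. ?c * ?c * t"] sum.cong refl) (simp add: disc_orth2 flt finj)
  also have "\<dots> = ?c * ?c * (\<Sum>p\<in>?I. 2^m)"
    by (intro arg_cong[where f="\<lambda>t. ?c * ?c * t"] sum.cong refl) (simp add: sum.delta)
  also have "\<dots> = ?c * ?c * (2^m * (2^\<gamma> * \<gamma>))"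
    by (simp add: card_cartesian_product)
  also have "\<dots> = 2^m * 2^\<gamma>" using assms by (simp add: field_simps)
  finally show ?thesis .
qed

lemma ptwise:
  assumes "2*\<gamma> < m"
  shows "\<bar>P_poly m \<gamma> y\<bar> \<le> (P_poly m \<gamma> y * P_poly m \<gamma> y / 2^\<gamma> + FF m \<gamma> y) / 2"
proof (cases "FF m \<gamma> y = 0")
  case True
  thus ?thesis unfolding P_factor[OF assms] by simp
next
  case False
  hence F: "FF m \<gamma> y = 2^\<gamma>" using F_vals by blast
  define t where "t = (1 / sqrt \<gamma>) * RR m \<gamma> y"
  have P: "P_poly m \<gamma> y = 2^\<gamma> * t" unfolding P_factor[OF assms] F t_def by simp
  have "0 \<le> (\<bar>t\<bar> - 1) * (\<bar>t\<bar> - 1)" by simp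
  hence "2 * \<bar>t\<bar> \<le> t * t + 1" by (simp add: algebra_simps abs_mult_self_eq)
  hence "2^\<gamma> * (2 * \<bar>t\<bar>) \<le> 2^\<gamma> * (t * t + 1)" by (intro mult_left_mono) auto
  thus ?thesis unfolding P F by (simp add: abs_mult field_simps)
qed





lemma L1:
  assumes "1 \<le> \<gamma>" "2*\<gamma> < m"
  shows "set_integrable lborel {0..<1} (P_poly m \<gamma>) \<and> (LINT x:{0..<1}|lborel. \<bar>P_poly m \<gamma> x\<bar>) \<le> 1"
proof -
  have st: "P_poly m \<gamma> x = P_poly m \<gamma> (real_of_int \<lfloor>2^m * x\<rfloor> / 2^m)" for x
    using P_step[OF assms(2) le_refl] .
  have A: "set_integrable lborel {0..<1} (P_poly m \<gamma>)"
    using step_integral[of "P_poly m \<gamma>" m] st by blast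
  have st2: "\<bar>P_poly m \<gamma> x\<bar> = \<bar>P_poly m \<gamma> (real_of_int \<lfloor>2^m * x\<rfloor> / 2^m)\<bar>" for x
    using st[of x] by (simp only:)
  have B: "(LINT x:{0..<1}|lborel. \<bar>P_poly m \<gamma> x\<bar>) = (\<Sum>i<2^m. \<bar>P_poly m \<gamma> (real i / 2^m)\<bar>) / 2^m"
    using step_integral[of "\<lambda>x. \<bar>P_poly m \<gamma> x\<bar>" m] st2 by blast
  have "(\<Sum>i<2^m. \<bar>P_poly m \<gamma> (real i / 2^m)\<bar>) \<le>
     (\<Sum>i<2^m. (P_poly m \<gamma> (real i / 2^m) * P_poly m \<gamma> (real i / 2^m) / 2^\<gamma> + FF m \<gamma> (real i / 2^m)) / 2)"
    by (rule sum_mono) (rule ptwise[OF assms(2)])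
  also have "\<dots> = ((\<Sum>i<2^m. P_poly m \<gamma> (real i / 2^m) * P_poly m \<gamma> (real i / 2^m)) / 2^\<gamma>
                  + (\<Sum>i<2^m. FF m \<gamma> (real i / 2^m))) / 2"
    by (simp only: sum_divide_distrib[symmetric] sum.distrib)
  also have "\<dots> = 2^m" unfolding sumP2[OF assms] sumF[OF assms] by simp
  finally have "(\<Sum>i<2^m. \<bar>P_poly m \<gamma> (real i / 2^m)\<bar>) \<le> 2^m" .
  hence "(LINT x:{0..<1}|lborel. \<bar>P_poly m \<gamma> x\<bar>) \<le> 2^m / 2^m" unfolding B
    by (intro divide_right_mono) auto
  thus ?thesis using A by simp
qed

lemma Linf:
  assumes "1 \<le> \<gamma>"
  shows "\<bar>P_poly m \<gamma> x\<bar> \<le> 2^\<gamma> * sqrt \<gamma>"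
proof -
  have "\<bar>\<Sum>v<2^\<gamma>. \<Sum>j<\<gamma>. walsh (mu m \<gamma> v j) x\<bar> \<le> (\<Sum>v<(2::nat)^\<gamma>. \<Sum>j<\<gamma>. \<bar>walsh (mu m \<gamma> v j) x\<bar>)"
    by (rule order_trans[OF sum_abs]) (intro sum_mono sum_abs)
  also have "\<dots> = 2^\<gamma> * real \<gamma>" by (simp add: walsh_abs)
  finally have h: "\<bar>\<Sum>v<2^\<gamma>. \<Sum>j<\<gamma>. walsh (mu m \<gamma> v j) x\<bar> \<le> 2^\<gamma> * real \<gamma>" .
  have "\<bar>P_poly m \<gamma> x\<bar> = (1 / sqrt \<gamma>) * \<bar>\<Sum>v<2^\<gamma>. \<Sum>j<\<gamma>. walsh (mu m \<gamma> v j) x\<bar>"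
    unfolding P_poly_def by (simp add: abs_mult)
  also have "\<dots> \<le> (1 / sqrt \<gamma>) * (2^\<gamma> * real \<gamma>)"
    by (rule mult_left_mono[OF h]) simp
  also have "\<dots> = 2^\<gamma> * (real \<gamma> / sqrt \<gamma>)" by simp
  also have "real \<gamma> / sqrt \<gamma> = sqrt \<gamma>" by (rule real_div_sqrt) simp
  finally show ?thesis .
qed

lemma cmp1:
  assumes "(e::nat) < P"
  shows "(P * v + e < P * V) \<longleftrightarrow> v < V"
proof
  assume "P * v + e < P * V"
  hence "P * v < P * V" by linarith
  thus "v < V" by simp
next
  assume "v < V"
  hence "P * (v+1) \<le> P * V" by (intro mult_le_mono2) simp
  thus "P * v + e < P * V" using assms by simp
qed

lemma cmp2:
  assumes "(e::nat) < P" "V < P"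
  shows "(P * v + e < P * V + V) \<longleftrightarrow> (v < V \<or> (v = V \<and> e < V))"
proof (cases "v < V")
  case True
  hence "P * v + e < P * V" using cmp1[OF assms(1)] by simp
  thus ?thesis using True by simp
next
  case False
  show ?thesis
  proof (cases "v = V")
    case True thus ?thesis by simp
  next
    case False
    hence "V + 1 \<le> v" using \<open>\<not> v < V\<close> by simp
    hence "P * (V+1) \<le> P * v" by (intro mult_le_mono2)
    hence "P * V + V < P * v + e" using assms by simp
    thus ?thesis using False \<open>\<not> v < V\<close> by simp
  qed
qed

lemma part4:
  assumes "1 \<le> \<gamma>" "2*\<gamma> < m"
  shows "\<exists>l::nat. 2 ^ (m - \<gamma>) \<le> l \<and> l < 2 ^ m \<and> 0 < l \<and> 2 ^ (m - 2 * \<gamma>) dvd l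
           \<and> \<bar>walsh_partial_sum (P_poly m \<gamma>) l x\<bar> \<ge> sqrt (real \<gamma>) / 4"
proof -
  let ?k = "m - 2*\<gamma>"
  let ?W = "\<lambda>j. walsh (2^(?k+j)) x"
  have W: "?W j = 1 \<or> ?W j = -1" for j
    using walsh_abs[of "2^(?k+j)" x] by (auto simp: abs_if split: if_splits)
  define J1 where "J1 = {j\<in>{..<\<gamma>}. ?W j = 1}"
  define J2 where "J2 = {j\<in>{..<\<gamma>}. ?W j = -1}"
  have U: "J1 \<union> J2 = {..<\<gamma>}" and D: "J1 \<inter> J2 = {}" using W unfolding J1_def J2_def by auto
  have f1: "finite J1" and f2: "finite J2" unfolding J1_def J2_def by auto
  have cs: "card J1 + card J2 = \<gamma>" using card_Un_disjoint[OF f1 f2 D] U by simp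
  obtain J and s :: real where J: "J \<subseteq> {..<\<gamma>}" "\<gamma> \<le> 2 * card J" "\<And>j. j \<in> J \<Longrightarrow> ?W j = s" "\<bar>s\<bar> = 1"
  proof (cases "card J2 \<le> card J1")
    case True
    show ?thesis by (rule that[of J1 1]) (use True cs in \<open>auto simp: J1_def\<close>)
  next
    case False
    show ?thesis by (rule that[of J2 "-1"]) (use False cs in \<open>auto simp: J2_def\<close>)
  qed
  have finJ: "finite J" using J(1) finite_subset by blast
  define V where "V = (\<Sum>j\<in>J. 2^j :: nat)"
  have bitV: "bit V j \<longleftrightarrow> j \<in> J" for j unfolding V_def by (rule bit_sum_pow[OF finJ])
  have Vlt: "V < 2^\<gamma>" unfolding V_def by (rule sum_pow_less[OF J(1)])
  have "J \<noteq> {}" using J(2) assms(1) by auto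
  then obtain j0 where "j0 \<in> J" by blast
  hence bj: "bit V j0" using bitV[of j0] by simp
  have "V \<noteq> 0"
  proof
    assume "V = 0"
    with bj show False by (simp add: bit_iff_odd)
  qed
  hence V1: "1 \<le> V" by simp
  define l1 where "l1 = 2^?k * (2^\<gamma> * V)"
  define l2 where "l2 = 2^?k * (2^\<gamma> * V + V)"
  let ?c = "1 / sqrt \<gamma>"
  let ?G = "walsh (2^(m-\<gamma>) * V) x * walsh (2^?k * V) x"
  let ?w = "\<lambda>v j. walsh (mu m \<gamma> v j) x"
  have "walsh_partial_sum (P_poly m \<gamma>) l2 x - walsh_partial_sum (P_poly m \<gamma>) l1 x =
        ?c * (\<Sum>v<2^\<gamma>. \<Sum>j<\<gamma>. (if mu m \<gamma> v j < l2 then ?w v j else 0) - (if mu m \<gamma> v j < l1 then ?w v j else 0))"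
    unfolding psum[OF assms(2)] by (simp add: sum_subtractf right_diff_distrib)
  also have "(\<Sum>v<2^\<gamma>. \<Sum>j<\<gamma>. (if mu m \<gamma> v j < l2 then ?w v j else 0) - (if mu m \<gamma> v j < l1 then ?w v j else 0))
      = (\<Sum>v<2^\<gamma>. \<Sum>j<\<gamma>. if v = V \<and> j \<in> J then ?w v j else 0)"
  proof (intro sum.cong refl)
    fix v j assume v: "v \<in> {..<(2::nat)^\<gamma>}" and j: "j \<in> {..<\<gamma>}"
    have e: "v XOR 2^j < 2^\<gamma>" using e_less v j by simp
    have m1: "mu m \<gamma> v j < l1 \<longleftrightarrow> v < V"
      unfolding mu_alt[OF assms(2), of v j, OF v[simplified]] l1_def using cmp1[OF e] by simp
    have m2: "mu m \<gamma> v j < l2 \<longleftrightarrow> v < V \<or> (v = V \<and> (v XOR 2^j) < V)"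
      unfolding mu_alt[OF assms(2), of v j, OF v[simplified]] l2_def using cmp2[OF e Vlt] by simp
    have m3: "v = V \<Longrightarrow> ((v XOR 2^j) < V \<longleftrightarrow> j \<in> J)" using xor_pow_lt bitV by simp
    show "(if mu m \<gamma> v j < l2 then ?w v j else 0) - (if mu m \<gamma> v j < l1 then ?w v j else 0)
          = (if v = V \<and> j \<in> J then ?w v j else 0)"
      using m1 m2 m3 by auto
  qed
  also have "\<dots> = (\<Sum>v<(2::nat)^\<gamma>. if v = V then (\<Sum>j<\<gamma>. if j \<in> J then ?w V j else 0) else 0)"
    by (intro sum.cong refl) auto
  also have "\<dots> = (\<Sum>j<\<gamma>. if j \<in> J then ?w V j else 0)" using Vlt by simp
  also have "\<dots> = (\<Sum>j\<in>{..<\<gamma>} \<inter> J. ?w V j)" by (simp add: sum.inter_restrict)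
  also have "{..<\<gamma>} \<inter> J = J" using J(1) by blast
  also have "(\<Sum>j\<in>J. ?w V j) = (\<Sum>j\<in>J. ?G * s)"
  proof (rule sum.cong[OF refl])
    fix j assume "j \<in> J"
    hence "j < \<gamma>" using J(1) by blast
    thus "?w V j = ?G * s" using mu_walsh[OF assms(2) Vlt \<open>j < \<gamma>\<close>, of x] J(3)[OF \<open>j \<in> J\<close>] by simp
  qed
  also have "\<dots> = real (card J) * ?G * s" by simp
  finally have diff: "walsh_partial_sum (P_poly m \<gamma>) l2 x - walsh_partial_sum (P_poly m \<gamma>) l1 x
      = ?c * (real (card J) * ?G * s)" .
  have "\<bar>?G\<bar> = 1" by (simp add: abs_mult walsh_abs)
  hence "\<bar>?c * (real (card J) * ?G * s)\<bar> = ?c * real (card J)" using J(4) by (simp add: abs_mult)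
  also have "?c * real (card J) \<ge> ?c * (real \<gamma> / 2)"
    using J(2) by (intro mult_left_mono) auto
  also have "?c * (real \<gamma> / 2) = sqrt \<gamma> / 2"
    using real_div_sqrt[of "real \<gamma>"] by simp
  finally have big: "sqrt \<gamma> / 2 \<le> \<bar>walsh_partial_sum (P_poly m \<gamma>) l2 x - walsh_partial_sum (P_poly m \<gamma>) l1 x\<bar>"
    unfolding diff .
  have mg: "(2::nat)^(m-\<gamma>) = 2^?k * 2^\<gamma>" using assms by (simp flip: power_add)
  have mm: "(2::nat)^m = 2^?k * (2^\<gamma> * 2^\<gamma>)" using assms by (simp flip: power_add)
  have lo: "2^(m-\<gamma>) \<le> l1" unfolding mg l1_def using V1 by simp
  have "l1 \<le> l2" unfolding l1_def l2_def by simp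
  have "2^\<gamma> * V + V < 2^\<gamma> * V + 2^\<gamma>" using Vlt by simp
  also have "\<dots> = 2^\<gamma> * (V + 1)" by simp
  also have "\<dots> \<le> 2^\<gamma> * 2^\<gamma>" using Vlt by (intro mult_le_mono2) simp
  finally have "l2 < 2^m" unfolding l2_def mm by simp
  have pos: "0 < (2::nat)^(m-\<gamma>)" by simp
  have ok1: "2 ^ (m - \<gamma>) \<le> l1 \<and> l1 < 2 ^ m \<and> 0 < l1 \<and> 2 ^ ?k dvd l1"
    using lo \<open>l1 \<le> l2\<close> \<open>l2 < 2^m\<close> pos V1 unfolding l1_def by auto
  have ok2: "2 ^ (m - \<gamma>) \<le> l2 \<and> l2 < 2 ^ m \<and> 0 < l2 \<and> 2 ^ ?k dvd l2"
    using lo \<open>l1 \<le> l2\<close> \<open>l2 < 2^m\<close> pos V1 unfolding l2_def by auto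
  show ?thesis
  proof (cases "sqrt \<gamma> / 4 \<le> \<bar>walsh_partial_sum (P_poly m \<gamma>) l2 x\<bar>")
    case True thus ?thesis using ok2 by blast
  next
    case False
    hence "sqrt \<gamma> / 4 \<le> \<bar>walsh_partial_sum (P_poly m \<gamma>) l1 x\<bar>" using big by linarith
    thus ?thesis using ok1 by blast
  qed
qed

theorem proposition2p1:
  fixes m \<gamma> :: nat
  assumes "\<gamma> \<ge> 1" and "2 * \<gamma> < m"
  shows "(set_integrable lborel {0..<1} (P_poly m \<gamma>)
         \<and> (LINT x:{0..<1}|lborel. \<bar>P_poly m \<gamma> x\<bar>) \<le> 1)
    \<and> (AE x in lborel. x \<in> {0..<1} \<longrightarrow> \<bar>P_poly m \<gamma> x\<bar> \<le> 2 ^ \<gamma> * sqrt (real \<gamma>))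
    \<and> walsh_spec (P_poly m \<gamma>) \<subseteq>
           {2 ^ (m - 2 * \<gamma>)..<2 ^ m} \<inter> {k. 2 ^ (m - 2 * \<gamma>) dvd k}
    \<and> (\<forall>x\<in>{0..<1::real}. \<exists>l::nat. 2 ^ (m - \<gamma>) \<le> l \<and> l < 2 ^ m
           \<and> 0 < l \<and> 2 ^ (m - 2 * \<gamma>) dvd l
           \<and> \<bar>walsh_partial_sum (P_poly m \<gamma>) l x\<bar> \<ge> sqrt (real \<gamma>) / 4)"
proof (intro conjI)
  show "set_integrable lborel {0..<1} (P_poly m \<gamma>)" using L1[OF assms] by blast
  show "(LINT x:{0..<1}|lborel. \<bar>P_poly m \<gamma> x\<bar>) \<le> 1" using L1[OF assms] by blast
  show "AE x in lborel. x \<in> {0..<1} \<longrightarrow> \<bar>P_poly m \<gamma> x\<bar> \<le> 2 ^ \<gamma> * sqrt (real \<gamma>)"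
    using Linf[OF assms(1)] by simp
  show "\<forall>x\<in>{0..<1::real}. \<exists>l::nat. 2 ^ (m - \<gamma>) \<le> l \<and> l < 2 ^ m
           \<and> 0 < l \<and> 2 ^ (m - 2 * \<gamma>) dvd l
           \<and> \<bar>walsh_partial_sum (P_poly m \<gamma>) l x\<bar> \<ge> sqrt (real \<gamma>) / 4"
    using part4[OF assms] by blast
  show "walsh_spec (P_poly m \<gamma>) \<subseteq> {2 ^ (m - 2 * \<gamma>)..<2 ^ m} \<inter> {k. 2 ^ (m - 2 * \<gamma>) dvd k}"
  proof
    fix n assume "n \<in> walsh_spec (P_poly m \<gamma>)"
    hence "walsh_coeff (P_poly m \<gamma>) n \<noteq> 0" unfolding walsh_spec_def by simp
    then obtain v j where v: "v < 2^\<gamma>" and j: "j < \<gamma>" and n: "mu m \<gamma> v j = n"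
      using spec[OF assms(2)] by blast
    have lt: "n < 2^m" using mu_lt[OF assms(2) v j] n by simp
    have e0: "v XOR 2^j \<noteq> 0 \<or> v \<noteq> 0"
    proof (cases "v = 0")
      case True thus ?thesis by simp
    qed simp
    have "1 \<le> 2^\<gamma> * v + (v XOR 2^j)" using e0 by (auto simp: Suc_le_eq)
    hence ge: "2^(m-2*\<gamma>) \<le> n" unfolding n[symmetric] mu_alt[OF assms(2) v]
      by (metis mult.right_neutral mult_le_mono2)
    have dv: "2^(m-2*\<gamma>) dvd n" unfolding n[symmetric] mu_alt[OF assms(2) v] by simp
    show "n \<in> {2 ^ (m - 2 * \<gamma>)..<2 ^ m} \<inter> {k. 2 ^ (m - 2 * \<gamma>) dvd k}"
      using lt ge dv by simp
  qed
qed


end
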